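(* Consider a finite reward-free MDP with occupancy polytope $\Phi$, let $d_e^\star\in\Phi$ and $\delta>0$, and define $\mathcal K_\delta:=\{\tilde r\in\Delta(S\times A):\mathrm{subopt}(\tilde r,d_e^\star)\ge\delta\}$. Suppose that for every $\bar r\in\mathcal K_\delta$ there exist $r_{\bar r}\in\mathcal R(d_e^\star)$ and a demonstrator pair $(d_{\bar r},\epsilon_{\bar r})$ with $d_{\bar r}\in\Phi$, $\epsilon_{\bar r}\ge0$, such that \[(\bar r-r_{\bar r})^\top(d_e^\star-d_{\bar r})>0,\qquad \mathrm{subopt}(r_{\bar r},d_{\bar r})\in[\epsilon_{\bar r}-\delta,\epsilon_{\bar r}].\] Then there exists a finite subset $\{\bar r_i\}_{i=1}^N\subseteq\mathcal K_\delta$ such that for every $\tilde r\in\mathcal K_\delta$ there is $i\in[N]$ with \[(\tilde r-r_{\bar r_i})^\top(d_e^\star-d_{\bar r_i})>0\quad\text{and}\quad\mathrm{subopt}(r_{\bar r_i},d_{\bar r_i})\in[\epsilon_{\bar r_i}-\delta,\epsilon_{\bar r_i}].\] In particular, this holds for every $\tilde r\in\Delta(S\times A)$ with $\mathrm{subopt}(\tilde r,d_e^\star)>\delta$, i.e. the finite collection $\{(d_{\bar r_i},\epsilon_{\bar r_i})\}_{i=1}^N$ satisfies this pointwise condition.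
   Context: The MDP has finite $S$, $A$, transitions $P$, initial distribution $\mu_0$, discount $\gamma\in(0,1)$; $(Md)(s)=\sum_a d(s,a)-\gamma\sum_{s',a'}P(s\mid s',a')d(s',a')$ and $\Phi=\{d\ge0:Md=(1-\gamma)\mu_0\}$. Rewards are $r\in\Delta(S\times A)$. $\mathrm{subopt}(r,d):=\max_{\tilde d\in\Phi}r^\top\tilde d-r^\top d$; $\mathcal R(d_e^\star):=\{r\in\Delta(S\times A):\mathrm{subopt}(r,d_e^\star)=0\}$. *)

theory Defs
  imports "HOL-Analysis.Analysis"
begin

text \<open>Finite state space 's and action space 'a are finite types.
  P s s' a' is the transition probability P(s | s', a').
  Occupancy measures / rewards are functions on 's \<times> 'a.\<close>

definition dotp :: "('s::finite \<times> 'a::finite \<Rightarrow> real) \<Rightarrow> ('s \<times> 'a \<Rightarrow> real) \<Rightarrow> real" where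
  "dotp r d = (\<Sum>x\<in>UNIV. r x * d x)"

definition flowM :: "real \<Rightarrow> ('s::finite \<Rightarrow> 's \<Rightarrow> 'a::finite \<Rightarrow> real)
     \<Rightarrow> ('s \<times> 'a \<Rightarrow> real) \<Rightarrow> 's \<Rightarrow> real" where
  "flowM \<gamma> P d s = (\<Sum>a\<in>UNIV. d (s, a)) - \<gamma> * (\<Sum>(s', a')\<in>UNIV. P s s' a' * d (s', a'))"

definition occ_polytope :: "real \<Rightarrow> ('s::finite \<Rightarrow> 's \<Rightarrow> 'a::finite \<Rightarrow> real)
     \<Rightarrow> ('s \<Rightarrow> real) \<Rightarrow> ('s \<times> 'a \<Rightarrow> real) set" where
  "occ_polytope \<gamma> P \<mu>0 = {d. (\<forall>x. 0 \<le> d x) \<and> (\<forall>s. flowM \<gamma> P d s = (1 - \<gamma>) * \<mu>0 s)}"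

definition simplexSA :: "('s::finite \<times> 'a::finite \<Rightarrow> real) set" where
  "simplexSA = {r. (\<forall>x. 0 \<le> r x) \<and> (\<Sum>x\<in>UNIV. r x) = 1}"

text \<open>subopt r d = max over occupancy polytope of r^T d' minus r^T d (max written as Sup;
  the polytope is nonempty and compact under the MDP assumptions, so the Sup is attained).\<close>
definition subopt :: "real \<Rightarrow> ('s::finite \<Rightarrow> 's \<Rightarrow> 'a::finite \<Rightarrow> real) \<Rightarrow> ('s \<Rightarrow> real)
     \<Rightarrow> ('s \<times> 'a \<Rightarrow> real) \<Rightarrow> ('s \<times> 'a \<Rightarrow> real) \<Rightarrow> real" where
  "subopt \<gamma> P \<mu>0 r d = Sup ((\<lambda>d'. dotp r d') ` occ_polytope \<gamma> P \<mu>0) - dotp r d"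

definition feasible_rewards :: "real \<Rightarrow> ('s::finite \<Rightarrow> 's \<Rightarrow> 'a::finite \<Rightarrow> real) \<Rightarrow> ('s \<Rightarrow> real)
     \<Rightarrow> ('s \<times> 'a \<Rightarrow> real) \<Rightarrow> ('s \<times> 'a \<Rightarrow> real) set" where
  "feasible_rewards \<gamma> P \<mu>0 de = {r \<in> simplexSA. subopt \<gamma> P \<mu>0 r de = 0}"

definition K_delta :: "real \<Rightarrow> ('s::finite \<Rightarrow> 's \<Rightarrow> 'a::finite \<Rightarrow> real) \<Rightarrow> ('s \<Rightarrow> real)
     \<Rightarrow> ('s \<times> 'a \<Rightarrow> real) \<Rightarrow> real \<Rightarrow> ('s \<times> 'a \<Rightarrow> real) set" where
  "K_delta \<gamma> P \<mu>0 de \<delta> = {r \<in> simplexSA. subopt \<gamma> P \<mu>0 r de \<ge> \<delta>}"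

end

theory Submission
  imports Defs
begin

lemma occ_sum1:
  fixes P :: "'s::finite \<Rightarrow> 's \<Rightarrow> 'a::finite \<Rightarrow> real"
  assumes g: "\<gamma> < 1" and P_sum: "\<And>s' a'. (\<Sum>s\<in>UNIV. P s s' a') = 1"
    and mu_sum: "(\<Sum>s\<in>UNIV. \<mu>0 s) = 1"
    and d: "d \<in> occ_polytope \<gamma> P \<mu>0"
  shows "(\<Sum>x\<in>UNIV. d x) = 1"
proof -
  have fl: "\<And>s. flowM \<gamma> P d s = (1 - \<gamma>) * \<mu>0 s" using d by (simp add: occ_polytope_def)
  have "(\<Sum>s\<in>UNIV. flowM \<gamma> P d s) = (1 - \<gamma>)" using fl mu_sum by (simp add: sum_distrib_left[symmetric])
  moreover have "(\<Sum>s\<in>UNIV. flowM \<gamma> P d s) =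
      (\<Sum>s\<in>UNIV. \<Sum>a\<in>UNIV. d (s, a)) - \<gamma> * (\<Sum>s\<in>UNIV. \<Sum>x\<in>UNIV. P s (fst x) (snd x) * d x)"
    by (simp add: flowM_def sum_subtractf sum_distrib_left case_prod_beta)
  moreover have "(\<Sum>s\<in>UNIV. \<Sum>a\<in>UNIV. d (s, a)) = (\<Sum>x\<in>UNIV. d x)"
    unfolding sum.cartesian_product UNIV_Times_UNIV by simp
  moreover have "(\<Sum>s\<in>UNIV. \<Sum>x\<in>UNIV. P s (fst x) (snd x) * d x) = (\<Sum>x\<in>UNIV. d x)"
    by (subst sum.swap) (simp add: sum_distrib_right[symmetric] P_sum)
  ultimately have "(1 - \<gamma>) * (\<Sum>x\<in>UNIV. d x) = (1 - \<gamma>) * 1" by (simp add: algebra_simps)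
  thus ?thesis using g by simp
qed

lemma sup_lip:
  fixes Phi :: "('s::finite \<times> 'a::finite \<Rightarrow> real) set"
  assumes ne: "Phi \<noteq> {}" and ph: "\<And>d. d \<in> Phi \<Longrightarrow> (\<forall>x. 0 \<le> d x) \<and> (\<Sum>x\<in>UNIV. d x) = 1"
    and e: "\<And>x. \<bar>r x - r' x\<bar> \<le> e"
  shows "Sup ((\<lambda>d'. dotp r d') ` Phi) \<le> Sup ((\<lambda>d'. dotp r' d') ` Phi) + e"
proof -
  have bdd: "bdd_above ((\<lambda>d'. dotp r' d') ` Phi)"
  proof (rule bdd_aboveI2)
    fix d assume d: "d \<in> Phi"
    have "dotp r' d = (\<Sum>x\<in>UNIV. r' x * d x)" by (simp add: dotp_def)
    also have "\<dots> \<le> (\<Sum>x\<in>UNIV. \<bar>r' x\<bar> * 1)"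
    proof (rule sum_mono)
      fix x
      have "d x \<le> 1"
      proof -
        have "d x \<le> (\<Sum>y\<in>UNIV. d y)" using ph[OF d] by (intro member_le_sum) auto
        thus ?thesis using ph[OF d] by simp
      qed
      have "r' x * d x \<le> \<bar>r' x\<bar> * d x" using ph[OF d] by (metis abs_ge_self mult_right_mono)
      also have "\<dots> \<le> \<bar>r' x\<bar> * 1" using \<open>d x \<le> 1\<close> by (metis abs_ge_zero mult_left_mono mult.right_neutral)
      finally show "r' x * d x \<le> \<bar>r' x\<bar> * 1" .
    qed
    finally show "dotp r' d \<le> (\<Sum>x\<in>UNIV. \<bar>r' x\<bar> * 1)" .
  qed
  show ?thesis
  proof (rule cSup_least)
    show "(\<lambda>d'. dotp r d') ` Phi \<noteq> {}" using ne by simp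
  next
    fix y assume "y \<in> (\<lambda>d'. dotp r d') ` Phi"
    then obtain d where d: "d \<in> Phi" and y: "y = dotp r d" by auto
    have "dotp r d - dotp r' d = (\<Sum>x\<in>UNIV. (r x - r' x) * d x)"
      by (simp add: dotp_def sum_subtractf[symmetric] algebra_simps)
    also have "\<dots> \<le> (\<Sum>x\<in>UNIV. e * d x)"
      by (rule sum_mono) (metis abs_le_D1 e mult_right_mono ph[OF d])
    also have "\<dots> = e" using ph[OF d] by (simp add: sum_distrib_left[symmetric])
    finally have "dotp r d \<le> dotp r' d + e" by simp
    moreover have "dotp r' d \<le> Sup ((\<lambda>d'. dotp r' d') ` Phi)"
      using bdd d by (intro cSup_upper) auto
    ultimately show "y \<le> Sup ((\<lambda>d'. dotp r' d') ` Phi) + e" using y by simp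
  qed
qed

lemma dotp_lip:
  fixes d :: "'s::finite \<times> 'a::finite \<Rightarrow> real"
  assumes ph: "(\<forall>x. 0 \<le> d x) \<and> (\<Sum>x\<in>UNIV. d x) = 1"
    and e: "\<And>x. \<bar>r x - r' x\<bar> \<le> e"
  shows "\<bar>dotp r d - dotp r' d\<bar> \<le> e"
proof -
  have eq: "dotp r d - dotp r' d = (\<Sum>x\<in>UNIV. (r x - r' x) * d x)"
    by (simp add: dotp_def sum_subtractf[symmetric] algebra_simps)
  have "\<bar>\<Sum>x\<in>UNIV. (r x - r' x) * d x\<bar> \<le> (\<Sum>x\<in>UNIV. \<bar>(r x - r' x) * d x\<bar>)" by (rule sum_abs)
  also have "\<dots> \<le> (\<Sum>x\<in>UNIV. e * d x)"
    by (rule sum_mono) (simp add: abs_mult, metis abs_of_nonneg e mult_right_mono ph)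
  also have "\<dots> = e" using ph by (simp add: sum_distrib_left[symmetric])
  finally show ?thesis using eq by simp
qed

theorem mainTheorem9:
  fixes \<gamma> :: real
    and P :: "'s::finite \<Rightarrow> 's \<Rightarrow> 'a::finite \<Rightarrow> real"
    and \<mu>0 :: "'s \<Rightarrow> real"
    and de :: "'s \<times> 'a \<Rightarrow> real"
    and \<delta> :: real
    and rf df :: "('s \<times> 'a \<Rightarrow> real) \<Rightarrow> ('s \<times> 'a \<Rightarrow> real)"
    and ef :: "('s \<times> 'a \<Rightarrow> real) \<Rightarrow> real"
  assumes gamma: "0 < \<gamma>" "\<gamma> < 1"
    and P_nonneg: "\<And>s s' a'. 0 \<le> P s s' a'"
    and P_sum: "\<And>s' a'. (\<Sum>s\<in>UNIV. P s s' a') = 1"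
    and mu_nonneg: "\<And>s. 0 \<le> \<mu>0 s"
    and mu_sum: "(\<Sum>s\<in>UNIV. \<mu>0 s) = 1"
    and de_in: "de \<in> occ_polytope \<gamma> P \<mu>0"
    and delta: "0 < \<delta>"
    and demo: "\<And>rb. rb \<in> K_delta \<gamma> P \<mu>0 de \<delta> \<Longrightarrow>
         rf rb \<in> feasible_rewards \<gamma> P \<mu>0 de \<and> df rb \<in> occ_polytope \<gamma> P \<mu>0 \<and> 0 \<le> ef rb
         \<and> dotp (\<lambda>x. rb x - rf rb x) (\<lambda>x. de x - df rb x) > 0
         \<and> ef rb - \<delta> \<le> subopt \<gamma> P \<mu>0 (rf rb) (df rb)
         \<and> subopt \<gamma> P \<mu>0 (rf rb) (df rb) \<le> ef rb"
  shows "\<exists>F. finite F \<and> F \<subseteq> K_delta \<gamma> P \<mu>0 de \<delta> \<and>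
           (\<forall>rt \<in> K_delta \<gamma> P \<mu>0 de \<delta>. \<exists>rb \<in> F.
              dotp (\<lambda>x. rt x - rf rb x) (\<lambda>x. de x - df rb x) > 0
              \<and> ef rb - \<delta> \<le> subopt \<gamma> P \<mu>0 (rf rb) (df rb)
              \<and> subopt \<gamma> P \<mu>0 (rf rb) (df rb) \<le> ef rb) \<and>
           (\<forall>rt \<in> simplexSA. subopt \<gamma> P \<mu>0 rt de > \<delta> \<longrightarrow> (\<exists>rb \<in> F.
              dotp (\<lambda>x. rt x - rf rb x) (\<lambda>x. de x - df rb x) > 0
              \<and> ef rb - \<delta> \<le> subopt \<gamma> P \<mu>0 (rf rb) (df rb)
              \<and> subopt \<gamma> P \<mu>0 (rf rb) (df rb) \<le> ef rb))"
proof -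
  define Phi where "Phi = occ_polytope \<gamma> P \<mu>0"
  define K where "K = K_delta \<gamma> P \<mu>0 de \<delta>"
  define G where "G = (\<lambda>v::real^('s \<times> 'a). subopt \<gamma> P \<mu>0 (vec_nth v) de)"
  define V where "V = {v::real^('s \<times> 'a). (\<forall>i. 0 \<le> v$i) \<and> (\<Sum>i\<in>UNIV. v$i) = 1 \<and> \<delta> \<le> G v}"
  define B where "B = (\<lambda>rb. {v::real^('s \<times> 'a).
       0 < dotp (\<lambda>x. v$x - rf rb x) (\<lambda>x. de x - df rb x)})"
  have ph: "(\<forall>x. 0 \<le> d x) \<and> (\<Sum>x\<in>UNIV. d x) = 1" if d: "d \<in> Phi" for d
  proof
    show "\<forall>x. 0 \<le> d x" using d by (simp add: Phi_def occ_polytope_def)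
    show "(\<Sum>x\<in>UNIV. d x) = 1" using occ_sum1[OF gamma(2) P_sum mu_sum, of d] d by (simp add: Phi_def)
  qed
  have ne: "Phi \<noteq> {}" using de_in Phi_def by auto
  have deph: "de \<in> Phi" using de_in Phi_def by auto
  have lipG: "G w \<le> G v + 2 * dist w v" for w v
  proof -
    have e: "\<And>x. \<bar>w$x - v$x\<bar> \<le> dist w v"
      by (metis component_le_norm_cart dist_norm vector_minus_component)
    have 1: "Sup ((\<lambda>d'. dotp (vec_nth w) d') ` Phi) \<le> Sup ((\<lambda>d'. dotp (vec_nth v) d') ` Phi) + dist w v"
      by (rule sup_lip[OF ne ph e]) auto
    have 2: "\<bar>dotp (vec_nth w) de - dotp (vec_nth v) de\<bar> \<le> dist w v"
      by (rule dotp_lip[OF ph[OF deph] e]) 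
    show ?thesis using 1 2 unfolding G_def subopt_def Phi_def by linarith
  qed
  have contG: "continuous_on UNIV G"
    unfolding continuous_on_iff
  proof (intro ballI allI impI)
    fix v e assume "(0::real) < e"
    show "\<exists>d>0. \<forall>x'\<in>UNIV. dist x' v < d \<longrightarrow> dist (G x') (G v) < e"
    proof (intro exI[of _ "e/3"] conjI ballI impI)
      show "0 < e/3" using \<open>0 < e\<close> by simp
      fix w assume "dist w v < e/3"
      moreover have "G w \<le> G v + 2 * dist w v" "G v \<le> G w + 2 * dist v w" using lipG by blast+
      ultimately show "dist (G w) (G v) < e" by (simp add: dist_real_def dist_commute abs_less_iff)
    qed
  qed
  have cV: "compact V"
  proof (subst compact_eq_bounded_closed, intro conjI)
    show "bounded V" unfolding bounded_iff
    proof (intro exI[of _ 1] ballI)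
      fix v assume "v \<in> V"
      hence nn: "\<forall>i. 0 \<le> v$i" and s1: "(\<Sum>i\<in>UNIV. v$i) = 1" unfolding V_def by blast+
      have "(\<Sum>i\<in>UNIV. \<bar>v$i\<bar>) = (\<Sum>i\<in>UNIV. v$i)" using nn by (intro sum.cong) auto
      hence "(\<Sum>i\<in>UNIV. \<bar>v$i\<bar>) = 1" using s1 by simp
      thus "norm v \<le> 1" using norm_le_l1_cart[of v] by simp
    qed
    have c1: "closed {v::real^('s \<times> 'a). \<forall>i. 0 \<le> v$i}"
      by (simp add: Collect_all_eq closed_INT closed_Collect_le continuous_on_component)
    have c2: "closed {v::real^('s \<times> 'a). (\<Sum>i\<in>UNIV. v$i) = 1}"
      by (intro closed_Collect_eq continuous_intros continuous_on_component)
    have c3: "closed {v. \<delta> \<le> G v}"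
      by (intro closed_Collect_le contG continuous_intros)
    have "V = {v::real^('s \<times> 'a). \<forall>i. 0 \<le> v$i} \<inter> {v. (\<Sum>i\<in>UNIV. v$i) = 1} \<inter> {v. \<delta> \<le> G v}"
      unfolding V_def by auto
    thus "closed V" using c1 c2 c3 by (simp add: closed_Int)
  qed
  have opB: "\<And>rb. rb \<in> K \<Longrightarrow> open (B rb)"
    unfolding B_def dotp_def
    by (intro open_Collect_less continuous_intros continuous_on_component)
  have cov: "V \<subseteq> (\<Union>rb\<in>K. B rb)"
  proof
    fix v assume v: "v \<in> V"
    have vK: "vec_nth v \<in> K" using v unfolding V_def K_def K_delta_def simplexSA_def G_def by auto
    have "v \<in> B (vec_nth v)" using demo[OF vK[unfolded K_def]] unfolding B_def by simp
    thus "v \<in> (\<Union>rb\<in>K. B rb)" using vK by blast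
  qed
  obtain F where F: "F \<subseteq> K" "finite F" "V \<subseteq> (\<Union>rb\<in>F. B rb)"
    using compactE_image[OF cV opB cov] by blast
  have main: "\<exists>rb \<in> F.
              dotp (\<lambda>x. rt x - rf rb x) (\<lambda>x. de x - df rb x) > 0
              \<and> ef rb - \<delta> \<le> subopt \<gamma> P \<mu>0 (rf rb) (df rb)
              \<and> subopt \<gamma> P \<mu>0 (rf rb) (df rb) \<le> ef rb" if rt: "rt \<in> K" for rt
  proof -
    have eq: "vec_nth (vec_lambda rt) = rt" by (rule ext) simp
    have "vec_lambda rt \<in> V" using rt unfolding V_def K_def K_delta_def simplexSA_def G_def by (auto simp: eq)
    then obtain rb where rb: "rb \<in> F" "vec_lambda rt \<in> B rb" using F(3) by blast
    have "rb \<in> K" using rb F(1) by blast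
    thus ?thesis using rb demo[of rb] unfolding B_def K_def by auto
  qed
  show ?thesis
  proof (intro exI[of _ F] conjI)
    show "finite F" by fact
    show "F \<subseteq> K_delta \<gamma> P \<mu>0 de \<delta>" using F(1) K_def by simp
    show "\<forall>rt \<in> K_delta \<gamma> P \<mu>0 de \<delta>. \<exists>rb \<in> F.
              dotp (\<lambda>x. rt x - rf rb x) (\<lambda>x. de x - df rb x) > 0
              \<and> ef rb - \<delta> \<le> subopt \<gamma> P \<mu>0 (rf rb) (df rb)
              \<and> subopt \<gamma> P \<mu>0 (rf rb) (df rb) \<le> ef rb" using main K_def by blast
    show "\<forall>rt \<in> simplexSA. subopt \<gamma> P \<mu>0 rt de > \<delta> \<longrightarrow> (\<exists>rb \<in> F.
              dotp (\<lambda>x. rt x - rf rb x) (\<lambda>x. de x - df rb x) > 0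
              \<and> ef rb - \<delta> \<le> subopt \<gamma> P \<mu>0 (rf rb) (df rb)
              \<and> subopt \<gamma> P \<mu>0 (rf rb) (df rb) \<le> ef rb)"
      using main unfolding K_def K_delta_def by auto
  qed
qed

end
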